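(* Let $A,\tilde A$ be irrational numbers and $\tau,\tilde t\in\mathbb R$. If for all $m,n\in\mathbb Z$ $$An+\tau\le m\iff \tilde An+\tilde t\le m,$$ then $A=\tilde A$ and $\tau=\tilde t$. *)

theory Defs
  imports Complex_Main
begin

end

theory Submission
  imports Defs "HOL-Analysis.Kronecker_Approximation_Theorem"
begin

lemma aux_lt:
  fixes A \<tau> t' :: real
  assumes "A \<notin> \<rat>" and "\<tau> < t'"
    and H: "\<And>m n :: int. (A * of_int n + \<tau> \<le> of_int m) \<longleftrightarrow> (A * of_int n + t' \<le> of_int m)"
  shows False
proof -
  have eps: "(t' - \<tau>)/2 > 0" using assms(2) by simp
  obtain h k :: int where "k > 0" and hk: "\<bar>of_int k * A - of_int h - (\<tau> + t')/2\<bar> < (t' - \<tau>)/2"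
    using sequence_of_fractional_parts_is_dense[OF assms(1) eps, of "(\<tau> + t')/2"] by blast
  have i1: "of_int k * A - of_int h < t'"
    and i2: "\<tau> < of_int k * A - of_int h"
    using hk unfolding abs_less_iff by (simp_all add: field_simps)
  have 1: "A * of_int (-k) + \<tau> \<le> of_int (-h)" using i2 by (simp add: mult.commute)
  have 2: "\<not> A * of_int (-k) + t' \<le> of_int (-h)" using i1 by (simp add: mult.commute)
  show False using H[where m="-h" and n="-k"] 1 2 by blast
qed

theorem proposition2:
  fixes A A' \<tau> t' :: real
  assumes "A \<notin> \<rat>" and "A' \<notin> \<rat>"
    and "\<And>m n :: int. (A * of_int n + \<tau> \<le> of_int m) \<longleftrightarrow> (A' * of_int n + t' \<le> of_int m)"
  shows "A = A' \<and> \<tau> = t'"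
proof -
  have ceq: "ceiling (A * of_int n + \<tau>) = ceiling (A' * of_int n + t')" for n :: int
  proof -
    have "ceiling (A * of_int n + \<tau>) \<le> m \<longleftrightarrow> ceiling (A' * of_int n + t') \<le> m" for m
      using assms(3)[where m=m and n=n] by (simp add: ceiling_le_iff)
    from this[of "ceiling (A * of_int n + \<tau>)"] this[of "ceiling (A' * of_int n + t')"]
    show ?thesis by simp
  qed
  have bd: "\<bar>(A - A') * of_int n + (\<tau> - t')\<bar> < 1" for n :: int
  proof -
    have a: "A * of_int n + \<tau> \<le> of_int (ceiling (A * of_int n + \<tau>))"
      "of_int (ceiling (A * of_int n + \<tau>)) < A * of_int n + \<tau> + 1"
      by linarith+
    have b: "A' * of_int n + t' \<le> of_int (ceiling (A' * of_int n + t'))"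
      "of_int (ceiling (A' * of_int n + t')) < A' * of_int n + t' + 1"
      by linarith+
    have c: "real_of_int (ceiling (A * of_int n + \<tau>)) = of_int (ceiling (A' * of_int n + t'))"
      using ceq[of n] by simp
    have d: "(A - A') * of_int n = A * of_int n - A' * of_int n" by (simp add: left_diff_distrib)
    show ?thesis unfolding abs_less_iff d using a b c by linarith
  qed
  have AA: "A = A'"
  proof (rule ccontr)
    assume ne: "A \<noteq> A'"
    define d where "d = \<bar>A - A'\<bar>"
    have dpos: "d > 0" using ne d_def by auto
    define n where "n = ceiling (2 / d)"
    have "2 / d \<le> of_int n" unfolding n_def by linarith
    then have "2 \<le> d * of_int n" using dpos by (simp add: field_simps)
    moreover have "\<bar>(A - A') * of_int n\<bar> = d * \<bar>of_int n\<bar>" by (simp add: d_def abs_mult)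
    moreover have "d * of_int n \<le> d * \<bar>of_int n\<bar>" using dpos by (simp add: mult_left_mono)
    moreover have "\<bar>\<tau> - t'\<bar> < 1" using bd[of 0] by simp
    moreover note bd[of n]
    moreover have "d * \<bar>of_int n\<bar> = \<bar>(A - A') * of_int n\<bar>" by (simp add: d_def abs_mult)
    moreover have "\<bar>(A - A') * of_int n\<bar> \<le> \<bar>(A - A') * of_int n + (\<tau> - t')\<bar> + \<bar>\<tau> - t'\<bar>"
      using abs_triangle_ineq4[of "(A - A') * of_int n + (\<tau> - t')" "\<tau> - t'"] by simp
    ultimately show False by linarith
  qed
  have H: "\<And>m n :: int. (A * of_int n + \<tau> \<le> of_int m) \<longleftrightarrow> (A * of_int n + t' \<le> of_int m)"
    using assms(3) AA by simp
  have "\<tau> = t'"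
  proof (rule ccontr)
    assume "\<tau> \<noteq> t'"
    then consider "\<tau> < t'" | "t' < \<tau>" by linarith
    then show False
    proof cases
      case 1 then show ?thesis using aux_lt[OF assms(1) 1 H] by blast
    next
      case 2 then show ?thesis using aux_lt[OF assms(1) 2] H by metis
    qed
  qed
  with AA show ?thesis by simp
qed

end
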